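(* Let $H$ be a weak Hopf algebra. The category ${}_H\mathbf{parMod}$ of partial $H$-modules is isomorphic to the category ${}_{{H_{par}^w}}\mathbf{Mod}$ of left modules over ${H_{par}^w}$.
   Context: All algebras are associative and unital over a field $\Bbbk$; Sweedler notation $\Delta(h)=h_1\otimes h_2$. A weak Hopf algebra is $(H,m,u,\Delta,\varepsilon,S)$ with $H$ an algebra, $(H,\Delta,\varepsilon)$ a coalgebra, and for all $g,h,k$: $\Delta(kh)=\Delta(k)\Delta(h)$; $\varepsilon(kh_1)\varepsilon(h_2g)=\varepsilon(khg)=\varepsilon(kh_2)\varepsilon(h_1g)$; $(1\otimes\Delta(1))(\Delta(1)\otimes1)=\Delta^2(1)=(\Delta(1)\otimes1)(1\otimes\Delta(1))$; $h_1S(h_2)=\varepsilon(1_1h)1_2$; $S(h_1)h_2=1_1\varepsilon(h1_2)$; $S(h)=S(h_1)h_2S(h_3)$, where $\Delta(1)=1_1\otimes1_2$. ${H_{par}^w}=T(H)/I$, where $T(H)$ is the tensor algebra of the vector space $H$ and $I$ is the ideal generated by, for all $h,k\in H$: $1_H-1_{T(H)}$; $h\otimes k_1\otimes S(k_2)-hk_1\otimes S(k_2)$; $h\otimes S(k_1)\otimes k_2-hS(k_1)\otimes k_2$; $h_1\otimes S(h_2)\otimes k-h_1\otimes S(h_2)k$; $S(h_1)\otimes h_2\otimes k-S(h_1)\otimes h_2k$; $h-h_1\otimes S(h_2)\otimes h_3$. A partial $H$-module is a vector space $M$ with a linear map $\bullet\colon H\otimes M\to M$ such that for all $m\in M$,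 $h,k\in H$: $1_H\bullet m=m$; $h\bullet(k_1\bullet(S(k_2)\bullet m))=hk_1\bullet(S(k_2)\bullet m)$; $h\bullet(S(k_1)\bullet(k_2\bullet m))=hS(k_1)\bullet(k_2\bullet m)$; $h_1\bullet(S(h_2)\bullet(k\bullet m))=h_1\bullet(S(h_2)k\bullet m)$; $S(h_1)\bullet(h_2\bullet(k\bullet m))=S(h_1)\bullet(h_2k\bullet m)$; $h_1\bullet(S(h_2)\bullet(h_3\bullet m))=h\bullet m$. Morphisms of partial $H$-modules are linear maps $f$ with $f(h\bullet m)=h\bullet f(m)$. *)

theory Defs
  imports Complex_Main "HOL-Library.Function_Algebras"
begin

text \<open>Elements of the free k-vector space on words (lists) of elements of H are
finitely supported functions 'h list => 'k.  The n-th tensor power of H is the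
quotient of the span of words of length n by the multilinearity relations; the
tensor algebra T(H) is the quotient of the whole free space by these relations.\<close>

definition fdelta :: "'h list \<Rightarrow> ('h list \<Rightarrow> 'k::zero_neq_one)" where
  "fdelta w = (\<lambda>v. if v = w then 1 else 0)"

definition fscale :: "'k::times \<Rightarrow> ('h list \<Rightarrow> 'k) \<Rightarrow> ('h list \<Rightarrow> 'k)" where
  "fscale c f = (\<lambda>w. c * f w)"

definition fsupp :: "('h list \<Rightarrow> 'k::zero) \<Rightarrow> 'h list set" where
  "fsupp f = {w. f w \<noteq> 0}"

definition Free :: "('h list \<Rightarrow> 'k::zero) set" where
  "Free = {f. finite (fsupp f)}"

text \<open>Elements supported on words of length 2 (representatives of elements of H (x) H).\<close>
definition Free2 :: "('h list \<Rightarrow> 'k::zero) set" where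
  "Free2 = {f \<in> Free. \<forall>w \<in> fsupp f. length w = 2}"

definition lsum :: "('k \<Rightarrow> 'v \<Rightarrow> 'v) \<Rightarrow> ('h list \<Rightarrow> 'v::comm_monoid_add) \<Rightarrow> ('h list \<Rightarrow> 'k::zero) \<Rightarrow> 'v" where
  "lsum sc G f = (\<Sum>w\<in>fsupp f. sc (f w) (G w))"

definition on2 :: "('h \<Rightarrow> 'h \<Rightarrow> 'v::zero) \<Rightarrow> 'h list \<Rightarrow> 'v" where
  "on2 F w = (case w of [a, b] \<Rightarrow> F a b | _ \<Rightarrow> 0)"

definition on3 :: "('h \<Rightarrow> 'h \<Rightarrow> 'h \<Rightarrow> 'v::zero) \<Rightarrow> 'h list \<Rightarrow> 'v" where
  "on3 F w = (case w of [a, b, c] \<Rightarrow> F a b c | _ \<Rightarrow> 0)"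

text \<open>Concatenation product (the tensor product of tensors; the product of T(H)).\<close>
definition conv :: "('h list \<Rightarrow> 'k::comm_ring_1) \<Rightarrow> ('h list \<Rightarrow> 'k) \<Rightarrow> ('h list \<Rightarrow> 'k)" where
  "conv f g = (\<lambda>w. \<Sum>i\<le>length w. f (take i w) * g (drop i w))"

text \<open>Componentwise product (the algebra structure of the tensor powers of H).\<close>
definition cmul :: "('h::times list \<Rightarrow> 'k::comm_ring_1) \<Rightarrow> ('h list \<Rightarrow> 'k) \<Rightarrow> ('h list \<Rightarrow> 'k)" where
  "cmul f g = lsum fscale (\<lambda>u. lsum fscale (\<lambda>v. fdelta (map2 (*) u v)) g) f"

inductive_set lspan :: "('h list \<Rightarrow> 'k::comm_ring_1) set \<Rightarrow> ('h list \<Rightarrow> 'k) set"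
  for S where
    lspan_zero: "0 \<in> lspan S"
  | lspan_step: "x \<in> lspan S \<Longrightarrow> g \<in> S \<Longrightarrow> x + fscale c g \<in> lspan S"

text \<open>Multilinearity relations (sH is the scalar multiplication of H).\<close>
definition linrel :: "('k::field \<Rightarrow> 'h::ring_1 \<Rightarrow> 'h) \<Rightarrow> ('h list \<Rightarrow> 'k) set" where
  "linrel sH =
     {fdelta (u @ [a + b] @ v) - fdelta (u @ [a] @ v) - fdelta (u @ [b] @ v) | u a b v. True}
   \<union> {fdelta (u @ [sH c a] @ v) - fscale c (fdelta (u @ [a] @ v)) | u c a v. True}"

text \<open>Equality in the tensor powers of H.\<close>
definition teq :: "('k::field \<Rightarrow> 'h::ring_1 \<Rightarrow> 'h) \<Rightarrow> ('h list \<Rightarrow> 'k) \<Rightarrow> ('h list \<Rightarrow> 'k) \<Rightarrow> bool" where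
  "teq sH x y \<longleftrightarrow> x - y \<in> lspan (linrel sH)"

definition ideal_gen :: "('h list \<Rightarrow> 'k::comm_ring_1) set \<Rightarrow> ('h list \<Rightarrow> 'k) set" where
  "ideal_gen S = lspan {conv (conv (fdelta u) g) (fdelta v) | u g v. g \<in> S}"

text \<open>(Delta (x) id) Delta h, i.e. h_1 (x) h_2 (x) h_3.\<close>
definition D2 :: "('h \<Rightarrow> ('h list \<Rightarrow> 'k::comm_ring_1)) \<Rightarrow> 'h \<Rightarrow> ('h list \<Rightarrow> 'k)" where
  "D2 \<Delta> h = lsum fscale (on2 (\<lambda>a b. conv (\<Delta> a) (fdelta [b]))) (\<Delta> h)"

definition weak_hopf_algebra ::
  "('k::field \<Rightarrow> 'h::ring_1 \<Rightarrow> 'h) \<Rightarrow> ('h \<Rightarrow> ('h list \<Rightarrow> 'k)) \<Rightarrow> ('h \<Rightarrow> 'k) \<Rightarrow> ('h \<Rightarrow> 'h) \<Rightarrow> bool" where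
  "weak_hopf_algebra sH \<Delta> \<epsilon> S \<longleftrightarrow>
     \<comment> \<open>H is a k-algebra\<close>
     vector_space sH
   \<and> (\<forall>c x y. sH c (x * y) = sH c x * y \<and> sH c (x * y) = x * sH c y)
   \<comment> \<open>(H, Delta, epsilon) is a coalgebra\<close>
   \<and> (\<forall>h. \<Delta> h \<in> Free2)
   \<and> (\<forall>x y. teq sH (\<Delta> (x + y)) (\<Delta> x + \<Delta> y))
   \<and> (\<forall>c x. teq sH (\<Delta> (sH c x)) (fscale c (\<Delta> x)))
   \<and> Vector_Spaces.linear sH (*) \<epsilon>
   \<and> (\<forall>h. teq sH (D2 \<Delta> h) (lsum fscale (on2 (\<lambda>a b. conv (fdelta [a]) (\<Delta> b))) (\<Delta> h)))
   \<and> (\<forall>h. teq sH (lsum fscale (on2 (\<lambda>a b. fscale (\<epsilon> a) (fdelta [b]))) (\<Delta> h)) (fdelta [h]))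
   \<and> (\<forall>h. teq sH (lsum fscale (on2 (\<lambda>a b. fscale (\<epsilon> b) (fdelta [a]))) (\<Delta> h)) (fdelta [h]))
   \<comment> \<open>S is linear\<close>
   \<and> Vector_Spaces.linear sH sH S
   \<comment> \<open>weak Hopf axioms\<close>
   \<and> (\<forall>k h. teq sH (\<Delta> (k * h)) (cmul (\<Delta> k) (\<Delta> h)))
   \<and> (\<forall>k h g. lsum (*) (on2 (\<lambda>a b. \<epsilon> (k * a) * \<epsilon> (b * g))) (\<Delta> h) = \<epsilon> (k * h * g)
            \<and> \<epsilon> (k * h * g) = lsum (*) (on2 (\<lambda>a b. \<epsilon> (k * b) * \<epsilon> (a * g))) (\<Delta> h))
   \<and> teq sH (cmul (conv (fdelta [1]) (\<Delta> 1)) (conv (\<Delta> 1) (fdelta [1]))) (D2 \<Delta> 1)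
   \<and> teq sH (D2 \<Delta> 1) (cmul (conv (\<Delta> 1) (fdelta [1])) (conv (fdelta [1]) (\<Delta> 1)))
   \<and> (\<forall>h. lsum sH (on2 (\<lambda>a b. a * S b)) (\<Delta> h) = lsum sH (on2 (\<lambda>a b. sH (\<epsilon> (a * h)) b)) (\<Delta> 1))
   \<and> (\<forall>h. lsum sH (on2 (\<lambda>a b. S a * b)) (\<Delta> h) = lsum sH (on2 (\<lambda>a b. sH (\<epsilon> (h * b)) a)) (\<Delta> 1))
   \<and> (\<forall>h. S h = lsum sH (on3 (\<lambda>a b c. S a * b * S c)) (D2 \<Delta> h))"

text \<open>Lifts to the free algebra of the generators of the ideal I.\<close>
definition parrels :: "('h::ring_1 \<Rightarrow> ('h list \<Rightarrow> 'k::comm_ring_1)) \<Rightarrow> ('h \<Rightarrow> 'h) \<Rightarrow> ('h list \<Rightarrow> 'k) set" where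
  "parrels \<Delta> S =
     {fdelta [1] - fdelta []}
   \<union> {lsum fscale (on2 (\<lambda>a b. fdelta [h, a, S b] - fdelta [h * a, S b])) (\<Delta> k) | h k. True}
   \<union> {lsum fscale (on2 (\<lambda>a b. fdelta [h, S a, b] - fdelta [h * S a, b])) (\<Delta> k) | h k. True}
   \<union> {lsum fscale (on2 (\<lambda>a b. fdelta [a, S b, k] - fdelta [a, S b * k])) (\<Delta> h) | h k. True}
   \<union> {lsum fscale (on2 (\<lambda>a b. fdelta [S a, b, k] - fdelta [S a, b * k])) (\<Delta> h) | h k. True}
   \<union> {fdelta [h] - lsum fscale (on3 (\<lambda>a b c. fdelta [a, S b, c])) (D2 \<Delta> h) | h. True}"

text \<open>The ideal of the free algebra whose quotient is H_par^w
  (preimage of I under the projection from the free algebra onto T(H)).\<close>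
definition Jpar where
  "Jpar sH \<Delta> S = ideal_gen (linrel sH \<union> parrels \<Delta> S)"

definition cls :: "('h list \<Rightarrow> 'k::comm_ring_1) set \<Rightarrow> ('h list \<Rightarrow> 'k) \<Rightarrow> ('h list \<Rightarrow> 'k) set" where
  "cls J x = {y \<in> Free. x - y \<in> J}"

definition Hpar where
  "Hpar sH \<Delta> S = cls (Jpar sH \<Delta> S) ` Free"

definition rep :: "'a set \<Rightarrow> 'a" where "rep X = (SOME x. x \<in> X)"

definition qadd where "qadd J X Y = cls J (rep X + rep Y)"
definition qscale where "qscale J c X = cls J (fscale c (rep X))"
definition qmul where "qmul J X Y = cls J (conv (rep X) (rep Y))"
definition qone where "qone J = cls J (fdelta [])"

definition par_alg_module ::
  "('k::field \<Rightarrow> 'h::ring_1 \<Rightarrow> 'h) \<Rightarrow> ('h \<Rightarrow> ('h list \<Rightarrow> 'k)) \<Rightarrow> ('h \<Rightarrow> 'h)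
   \<Rightarrow> ('k \<Rightarrow> 'm::ab_group_add \<Rightarrow> 'm) \<Rightarrow> (('h list \<Rightarrow> 'k) set \<Rightarrow> 'm \<Rightarrow> 'm) \<Rightarrow> bool" where
  "par_alg_module sH \<Delta> S sM act \<longleftrightarrow>
     (let J = Jpar sH \<Delta> S; A = Hpar sH \<Delta> S in
       (\<forall>X. X \<notin> A \<longrightarrow> act X = (\<lambda>_. undefined))
     \<and> (\<forall>X\<in>A. Vector_Spaces.linear sM sM (act X))
     \<and> (\<forall>X\<in>A. \<forall>Y\<in>A. \<forall>m. act (qadd J X Y) m = act X m + act Y m)
     \<and> (\<forall>c. \<forall>X\<in>A. \<forall>m. act (qscale J c X) m = sM c (act X m))
     \<and> (\<forall>X\<in>A. \<forall>Y\<in>A. \<forall>m. act (qmul J X Y) m = act X (act Y m))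
     \<and> (\<forall>m. act (qone J) m = m))"

definition par_alg_module_hom where
  "par_alg_module_hom sH \<Delta> S sM sN act act' f \<longleftrightarrow>
     Vector_Spaces.linear sM sN f
   \<and> (\<forall>X\<in>Hpar sH \<Delta> S. \<forall>m. f (act X m) = act' X (f m))"

definition partial_module ::
  "('k::field \<Rightarrow> 'h::ring_1 \<Rightarrow> 'h) \<Rightarrow> ('h \<Rightarrow> ('h list \<Rightarrow> 'k)) \<Rightarrow> ('h \<Rightarrow> 'h)
   \<Rightarrow> ('k \<Rightarrow> 'm::ab_group_add \<Rightarrow> 'm) \<Rightarrow> ('h \<Rightarrow> 'm \<Rightarrow> 'm) \<Rightarrow> bool" where
  "partial_module sH \<Delta> S sM act \<longleftrightarrow>
     \<comment> \<open>the action is a linear map H (x) M \<rightarrow> M, i.e. bilinear\<close>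
     (\<forall>h. Vector_Spaces.linear sM sM (act h))
   \<and> (\<forall>m. Vector_Spaces.linear sH sM (\<lambda>h. act h m))
   \<and> (\<forall>m. act 1 m = m)
   \<and> (\<forall>h k m. lsum sM (on2 (\<lambda>a b. act h (act a (act (S b) m)))) (\<Delta> k)
             = lsum sM (on2 (\<lambda>a b. act (h * a) (act (S b) m))) (\<Delta> k))
   \<and> (\<forall>h k m. lsum sM (on2 (\<lambda>a b. act h (act (S a) (act b m)))) (\<Delta> k)
             = lsum sM (on2 (\<lambda>a b. act (h * S a) (act b m))) (\<Delta> k))
   \<and> (\<forall>h k m. lsum sM (on2 (\<lambda>a b. act a (act (S b) (act k m)))) (\<Delta> h)
             = lsum sM (on2 (\<lambda>a b. act a (act (S b * k) m))) (\<Delta> h))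
   \<and> (\<forall>h k m. lsum sM (on2 (\<lambda>a b. act (S a) (act b (act k m)))) (\<Delta> h)
             = lsum sM (on2 (\<lambda>a b. act (S a) (act (b * k) m))) (\<Delta> h))
   \<and> (\<forall>h m. lsum sM (on3 (\<lambda>a b c. act a (act (S b) (act c m)))) (D2 \<Delta> h) = act h m)"

definition partial_module_hom where
  "partial_module_hom sM sN act act' f \<longleftrightarrow>
     Vector_Spaces.linear sM sN f \<and> (\<forall>h m. f (act h m) = act' h (f m))"

text \<open>The functor from H_par^w-modules to partial H-modules: restriction along
  H \<rightarrow> H_par^w, h \<mapsto> [h]; it is the identity on underlying spaces and maps.\<close>
definition to_partial where
  "to_partial sH \<Delta> S act = (\<lambda>h m. act (cls (Jpar sH \<Delta> S) (fdelta [h])) m)"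

end

theory Submission
  imports Defs
begin

lemma sum_fun_apply: "(sum FF A) x = (\<Sum>a\<in>A. FF a x)"
  by (induct A rule: infinite_finite_induct) auto

lemma fsupp_fdelta[simp]: "fsupp (fdelta w :: 'h list \<Rightarrow> 'k::zero_neq_one) = {w}"
  by (auto simp: fsupp_def fdelta_def)

lemma Free_fdelta[simp]: "fdelta w \<in> Free"
  by (simp add: Free_def)

lemma Free_zero[simp]: "0 \<in> Free"
  by (simp add: Free_def fsupp_def)

lemma Free_add[simp]: "(f::'h list \<Rightarrow> 'k::monoid_add) \<in> Free \<Longrightarrow> g \<in> Free \<Longrightarrow> f + g \<in> Free"
proof -
  assume "f \<in> Free" "g \<in> Free"
  moreover have "fsupp (f + g) \<subseteq> fsupp f \<union> fsupp g" by (auto simp: fsupp_def)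
  ultimately show ?thesis unfolding Free_def by (auto intro: finite_subset)
qed

lemma Free_uminus[simp]: "(f::'h list \<Rightarrow> 'k::ab_group_add) \<in> Free \<Longrightarrow> - f \<in> Free"
  unfolding Free_def fsupp_def by simp

lemma Free_diff[simp]: "(f::'h list \<Rightarrow> 'k::ab_group_add) \<in> Free \<Longrightarrow> g \<in> Free \<Longrightarrow> f - g \<in> Free"
  using Free_add[of f "- g"] by simp

lemma Free_fscale[simp]: "(f::'h list \<Rightarrow> 'k::mult_zero) \<in> Free \<Longrightarrow> fscale c f \<in> Free"
proof -
  assume "f \<in> Free"
  moreover have "fsupp (fscale c f) \<subseteq> fsupp f" by (auto simp: fsupp_def fscale_def)
  ultimately show ?thesis unfolding Free_def by (auto intro: finite_subset)
qed

lemma Free_sum: "(\<And>a. a \<in> A \<Longrightarrow> FF a \<in> Free) \<Longrightarrow> sum FF A \<in> Free"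
  by (induct A rule: infinite_finite_induct) auto

lemma fscale_add: "fscale c (f + g) = fscale c f + fscale c (g::'h list \<Rightarrow> 'k::semiring)"
  by (auto simp: fscale_def fun_eq_iff algebra_simps)

lemma fscale_sum: "fscale (c::'k::comm_ring_1) (sum FF A) = (\<Sum>a\<in>A. fscale c (FF a))"
proof (induct A rule: infinite_finite_induct)
  case (insert x X)
  have "sum FF (insert x X) = FF x + sum FF X" by (rule sum.insert[OF insert(1,2)])
  then show ?case using insert by (simp only: fscale_add sum.insert[OF insert(1,2)])
qed (auto simp: fscale_def fun_eq_iff)

lemma fscale_minus1: "fscale (-1) f = - (f::'h list \<Rightarrow> 'k::comm_ring_1)"
  by (auto simp: fscale_def fun_eq_iff)

lemma fscale_fscale: "fscale a (fscale b f) = fscale (a*b) (f::'h list \<Rightarrow> 'k::comm_ring_1)"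
  by (auto simp: fscale_def fun_eq_iff)

lemma Free_decomp:
  assumes "f \<in> Free"
  shows "f = (\<Sum>w\<in>fsupp f. fscale (f w) (fdelta w :: 'h list \<Rightarrow> 'k::comm_ring_1))"
proof -
  have fin: "finite (fsupp f)" using assms by (simp add: Free_def)
  show ?thesis
  proof (rule ext)
    fix v
    have "(\<Sum>w\<in>fsupp f. fscale (f w) (fdelta w) v) = (\<Sum>w\<in>fsupp f. if w = v then f w else 0)"
      by (rule sum.cong) (auto simp: fscale_def fdelta_def)
    also have "\<dots> = f v" using fin by (simp add: sum.delta' fsupp_def)
    finally show "f v = (\<Sum>w\<in>fsupp f. fscale (f w) (fdelta w)) v"
      by (simp add: sum_fun_apply)
  qed
qed

lemma lsum_superset:
  assumes "module sc" "finite A" "fsupp f \<subseteq> A"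
  shows "lsum sc G f = (\<Sum>w\<in>A. sc (f w) (G w))"
  unfolding lsum_def
  by (rule sum.mono_neutral_left) (use assms in \<open>auto simp: fsupp_def module.scale_zero_left\<close>)

lemma lsum_add:
  assumes "module sc" "f \<in> Free" "g \<in> Free"
  shows "lsum sc G (f + g) = lsum sc G f + lsum sc G g"
proof -
  let ?A = "fsupp f \<union> fsupp g"
  have fin: "finite ?A" using assms by (simp add: Free_def)
  have "fsupp (f+g) \<subseteq> ?A" by (auto simp: fsupp_def)
  then show ?thesis using fin assms
    by (simp add: lsum_superset[of sc ?A] module.scale_left_distrib sum.distrib)
qed

lemma lsum_fscale:
  assumes "module sc" "f \<in> Free"
  shows "lsum sc G (fscale c f) = sc c (lsum sc G f)"
proof -
  have fin: "finite (fsupp f)" using assms by (simp add: Free_def)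
  have "fsupp (fscale c f) \<subseteq> fsupp f" by (auto simp: fsupp_def fscale_def)
  then show ?thesis using fin assms
    by (simp add: lsum_superset[of sc "fsupp f"] fscale_def module.scale_sum_right module.scale_scale)
qed

lemma lsum_zero: "lsum sc G 0 = 0"
  by (simp add: lsum_def fsupp_def)

lemma lsum_fdelta:
  assumes "module sc"
  shows "lsum sc G (fdelta w) = G w"
  using assms unfolding lsum_def fsupp_fdelta by (simp add: fdelta_def module.scale_one)

lemma lsum_uminus:
  assumes "module sc" "f \<in> Free"
  shows "lsum sc G (- f) = - lsum sc G f"
  using lsum_fscale[OF assms, of G "-1"] assms by (simp add: fscale_minus1 module.scale_minus_left module.scale_one)

lemma lsum_diff:
  assumes "module sc" "f \<in> Free" "g \<in> Free"
  shows "lsum sc G (f - g) = lsum sc G f - lsum sc G g"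
  using lsum_add[OF assms(1,2), of "-g" G] lsum_uminus[OF assms(1,3)] assms by simp

lemma lsum_sum:
  assumes "module sc" "\<And>a. a \<in> A \<Longrightarrow> FF a \<in> Free"
  shows "lsum sc G (sum FF A) = (\<Sum>a\<in>A. lsum sc G (FF a))"
  using assms(2)
proof (induct A rule: infinite_finite_induct)
  case (insert x X)
  have e: "sum FF (insert x X) = FF x + sum FF X" by (rule sum.insert[OF insert(1,2)])
  have f1: "FF x \<in> Free" using insert by blast
  have f2: "sum FF X \<in> Free" using insert by (blast intro: Free_sum)
  have "lsum sc G (sum FF (insert x X)) = lsum sc G (FF x) + lsum sc G (sum FF X)"
    unfolding e by (rule lsum_add[OF assms(1) f1 f2])
  also have "\<dots> = lsum sc G (FF x) + (\<Sum>a\<in>X. lsum sc G (FF a))" using insert by simp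
  also have "\<dots> = (\<Sum>a\<in>insert x X. lsum sc G (FF a))" by (rule sum.insert[OF insert(1,2), symmetric])
  finally show ?case .
qed (auto simp: lsum_zero)

lemma lsum_G_add:
  assumes "module sc"
  shows "lsum sc (\<lambda>w. G1 w + G2 w) f = lsum sc G1 f + lsum sc G2 f"
  using assms by (simp add: lsum_def module.scale_right_distrib sum.distrib)

lemma lsum_G_diff:
  assumes "module sc"
  shows "lsum sc (\<lambda>w. G1 w - G2 w) f = lsum sc G1 f - lsum sc G2 f"
  using assms by (simp add: lsum_def module.scale_right_diff_distrib sum_subtractf)

lemma lsum_cong: "(\<And>w. w \<in> fsupp f \<Longrightarrow> G1 w = G2 w) \<Longrightarrow> lsum sc G1 f = lsum sc G2 f"
  by (simp add: lsum_def)

lemma lsum_hom: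
  assumes "module sc" "module sc'" "\<And>x y. \<phi> (x + y) = \<phi> x + \<phi> y" "\<And>c x. \<phi> (sc c x) = sc' c (\<phi> x)"
  shows "\<phi> (lsum sc G f) = lsum sc' (\<lambda>w. \<phi> (G w)) f"
proof -
  interpret additive \<phi> by standard (rule assms(3))
  show ?thesis by (simp add: lsum_def sum assms(4))
qed

lemma conv_add_left: "conv (f + g) h = conv f h + conv g (h::'h list \<Rightarrow> 'k::comm_ring_1)"
  by (rule ext) (simp add: conv_def algebra_simps sum.distrib)

lemma conv_add_right: "conv h (f + g) = conv h f + conv h (g::'h list \<Rightarrow> 'k::comm_ring_1)"
  by (rule ext) (simp add: conv_def algebra_simps sum.distrib)

lemma conv_fscale_left: "conv (fscale c f) g = fscale c (conv f (g::'h list \<Rightarrow> 'k::comm_ring_1))"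
  by (rule ext) (simp add: conv_def fscale_def sum_distrib_left algebra_simps)

lemma conv_fscale_right: "conv f (fscale c g) = fscale c (conv f (g::'h list \<Rightarrow> 'k::comm_ring_1))"
  by (rule ext) (simp add: conv_def fscale_def sum_distrib_left algebra_simps)

lemma conv_zero_left: "conv 0 g = (0::'h list \<Rightarrow> 'k::comm_ring_1)"
  by (rule ext) (simp add: conv_def)

lemma conv_zero_right: "conv g 0 = (0::'h list \<Rightarrow> 'k::comm_ring_1)"
  by (rule ext) (simp add: conv_def)

lemma conv_sum_left: "conv (sum FF A) g = (\<Sum>a\<in>A. conv (FF a) (g::'h list \<Rightarrow> 'k::comm_ring_1))"
proof (induct A rule: infinite_finite_induct)
  case (insert x X)
  have e: "sum FF (insert x X) = FF x + sum FF X" by (rule sum.insert[OF insert(1,2)])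
  show ?case unfolding e conv_add_left insert(3) by (rule sum.insert[OF insert(1,2), symmetric])
next
  case (infinite A)
  show ?case by (simp only: sum.infinite[OF infinite] conv_zero_left)
next
  case empty
  show ?case by (simp only: sum.empty conv_zero_left)
qed

lemma conv_sum_right: "conv g (sum FF A) = (\<Sum>a\<in>A. conv g (FF a :: 'h list \<Rightarrow> 'k::comm_ring_1))"
proof (induct A rule: infinite_finite_induct)
  case (insert x X)
  have e: "sum FF (insert x X) = FF x + sum FF X" by (rule sum.insert[OF insert(1,2)])
  show ?case unfolding e conv_add_right insert(3) by (rule sum.insert[OF insert(1,2), symmetric])
next
  case (infinite A)
  show ?case by (simp only: sum.infinite[OF infinite] conv_zero_right)
next
  case empty
  show ?case by (simp only: sum.empty conv_zero_right)
qed

lemma conv_diff_left: "conv (f - g) h = conv f h - conv g (h::'h list \<Rightarrow> 'k::comm_ring_1)"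
  by (rule ext) (simp add: conv_def algebra_simps sum_subtractf)

lemma conv_diff_right: "conv h (f - g) = conv h f - conv h (g::'h list \<Rightarrow> 'k::comm_ring_1)"
  by (rule ext) (simp add: conv_def algebra_simps sum_subtractf)

lemma conv_fdelta: "conv (fdelta u) (fdelta v) = (fdelta (u @ v) :: 'h list \<Rightarrow> 'k::comm_ring_1)"
proof (rule ext)
  fix w :: "'h list"
  have "conv (fdelta u) (fdelta v) w =
     (\<Sum>i\<le>length w. if i = length u then (if w = u @ v then 1 else 0) else (0::'k))"
    unfolding conv_def
  proof (rule sum.cong[OF refl])
    fix i assume i: "i \<in> {..length w}"
    show "(fdelta u (take i w) :: 'k) * fdelta v (drop i w) =
      (if i = length u then (if w = u @ v then 1 else 0) else 0)"
    proof (cases "take i w = u \<and> drop i w = v")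
      case True
      then have "i = length u" "w = u @ v" using i by auto
      then show ?thesis using True by (simp add: fdelta_def)
    next
      case False
      then have "\<not> (i = length u \<and> w = u @ v)" by auto
      then show ?thesis using False by (auto simp: fdelta_def)
    qed
  qed
  also have "\<dots> = fdelta (u @ v) w"
    by (simp add: fdelta_def)
  finally show "conv (fdelta u) (fdelta v) w = (fdelta (u @ v) w :: 'k)" .
qed

lemma Free_conv[simp]:
  fixes f g :: "'h list \<Rightarrow> 'k::comm_ring_1"
  assumes "f \<in> Free" "g \<in> Free"
  shows "conv f g \<in> Free"
proof -
  have "fsupp (conv f g) \<subseteq> (\<lambda>(u,v). u @ v) ` (fsupp f \<times> fsupp g)"
  proof
    fix w assume "w \<in> fsupp (conv f g)"
    then obtain i where "f (take i w) * g (drop i w) \<noteq> 0"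
      unfolding fsupp_def conv_def by (auto elim: sum.not_neutral_contains_not_neutral)
    then have "f (take i w) \<noteq> 0" "g (drop i w) \<noteq> 0" by auto
    then have "(take i w, drop i w) \<in> fsupp f \<times> fsupp g" by (simp add: fsupp_def)
    then show "w \<in> (\<lambda>(u,v). u @ v) ` (fsupp f \<times> fsupp g)"
      by (metis (no_types, lifting) append_take_drop_id case_prod_conv image_eqI)
  qed
  then show ?thesis using assms unfolding Free_def by (auto intro: finite_subset)
qed

lemma conv_assoc_aux:
  fixes x y z :: "'h list \<Rightarrow> 'k::comm_ring_1"
  shows "conv (conv (\<Sum>a\<in>A. fscale (x a) (fdelta a)) (\<Sum>b\<in>B. fscale (y b) (fdelta b))) (\<Sum>c\<in>C. fscale (z c) (fdelta c))
       = conv (\<Sum>a\<in>A. fscale (x a) (fdelta a)) (conv (\<Sum>b\<in>B. fscale (y b) (fdelta b)) (\<Sum>c\<in>C. fscale (z c) (fdelta c)))"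
  by (simp only: conv_sum_left conv_sum_right conv_fscale_left conv_fscale_right conv_fdelta fscale_sum append_assoc)

lemma conv_assoc:
  fixes f g h :: "'h list \<Rightarrow> 'k::comm_ring_1"
  assumes "f \<in> Free" "g \<in> Free" "h \<in> Free"
  shows "conv (conv f g) h = conv f (conv g h)"
  using conv_assoc_aux[of f "fsupp f" g "fsupp g" h "fsupp h"]
  by (simp only: Free_decomp[OF assms(1), symmetric] Free_decomp[OF assms(2), symmetric] Free_decomp[OF assms(3), symmetric])

lemma fscale_zero: "fscale c 0 = (0::'h list \<Rightarrow> 'k::mult_zero)"
  by (simp add: fscale_def fun_eq_iff)

lemma lspan_add: "y \<in> lspan T \<Longrightarrow> x \<in> lspan T \<Longrightarrow> x + y \<in> lspan T"
proof (induct rule: lspan.induct)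
  case lspan_zero
  then show ?case by simp
next
  case (lspan_step y g c)
  then have ih: "x + y \<in> lspan T" unfolding plus_fun_def by blast
  have "(x + y) + fscale c g \<in> lspan T" by (rule lspan.lspan_step[OF ih]) (use lspan_step in blast)
  then show ?case by (simp add: plus_fun_def add.assoc)
qed

lemma lspan_fscale: "x \<in> lspan T \<Longrightarrow> fscale c x \<in> lspan T"
proof (induct x rule: lspan.induct)
  case lspan_zero
  show ?case by (simp only: fscale_zero lspan.lspan_zero)
next
  case (lspan_step y g d)
  then have "fscale c y + fscale (c * d) g \<in> lspan T" by (intro lspan.lspan_step) auto
  then show ?case by (simp add: plus_fun_def fscale_def algebra_simps)
qed

lemma lspan_base: "g \<in> T \<Longrightarrow> g \<in> lspan T"
  using lspan.lspan_step[OF lspan.lspan_zero, of g T 1] by (simp add: fscale_def)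

lemma lspan_uminus: "x \<in> lspan T \<Longrightarrow> - x \<in> lspan T"
  using lspan_fscale[of x T "-1"] by (simp add: fscale_minus1)

lemma lspan_diff: "x \<in> lspan T \<Longrightarrow> y \<in> lspan T \<Longrightarrow> x - y \<in> lspan T"
  using lspan_add[of "-y" T x] lspan_uminus[of y T] by simp

lemma lspan_sum: "(\<And>a. a \<in> A \<Longrightarrow> FF a \<in> lspan T) \<Longrightarrow> sum FF A \<in> lspan T"
proof (induct A rule: infinite_finite_induct)
  case (infinite A)
  show ?case by (simp only: sum.infinite[OF infinite(1)] lspan.lspan_zero)
next
  case empty
  show ?case by (simp only: sum.empty lspan.lspan_zero)
next
  case (insert x X)
  have e: "sum FF (insert x X) = FF x + sum FF X" by (rule sum.insert[OF insert(1,2)])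
  show ?case unfolding e by (rule lspan_add) (use insert in auto)
qed

lemma lspan_Free: "x \<in> lspan T \<Longrightarrow> T \<subseteq> Free \<Longrightarrow> x \<in> Free"
proof (induct rule: lspan.induct)
  case lspan_zero
  show ?case by (rule Free_zero)
next
  case (lspan_step y g c)
  then show ?case by (intro Free_add Free_fscale) auto
qed

definition Ggen :: "('h list \<Rightarrow> 'k::comm_ring_1) set \<Rightarrow> ('h list \<Rightarrow> 'k) set" where
  "Ggen R = {conv (conv (fdelta u) g) (fdelta v) | u g v. g \<in> R}"

lemma ideal_gen_Ggen: "ideal_gen R = lspan (Ggen R)"
  by (simp add: ideal_gen_def Ggen_def)

lemma Ggen_Free: "R \<subseteq> Free \<Longrightarrow> Ggen R \<subseteq> Free"
  by (auto simp: Ggen_def)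

lemma ideal_Free: "R \<subseteq> Free \<Longrightarrow> x \<in> ideal_gen R \<Longrightarrow> x \<in> Free"
  using lspan_Free[OF _ Ggen_Free] by (simp add: ideal_gen_Ggen)

lemma conv_fdelta_Nil_left: "conv (fdelta []) g = (g::'h list \<Rightarrow> 'k::comm_ring_1)"
proof (rule ext)
  fix w
  have "conv (fdelta []) g w = (\<Sum>i\<le>length w. if i = 0 then g w else 0)"
    unfolding conv_def by (rule sum.cong) (auto simp: fdelta_def)
  then show "conv (fdelta []) g w = g w" by simp
qed

lemma conv_fdelta_Nil_right: "conv g (fdelta []) = (g::'h list \<Rightarrow> 'k::comm_ring_1)"
proof (rule ext)
  fix w
  have "conv g (fdelta []) w = (\<Sum>i\<le>length w. if i = length w then g w else 0)"
    unfolding conv_def by (rule sum.cong) (auto simp: fdelta_def)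
  then show "conv g (fdelta []) w = g w" by simp
qed

lemma ideal_base: "g \<in> R \<Longrightarrow> (g::'h list \<Rightarrow> 'k::comm_ring_1) \<in> ideal_gen R"
proof -
  assume g: "g \<in> R"
  have "conv (conv (fdelta []) g) (fdelta []) = g" by (simp add: conv_fdelta_Nil_left conv_fdelta_Nil_right)
  moreover have "conv (conv (fdelta []) g) (fdelta []) \<in> Ggen R" unfolding Ggen_def using g by blast
  ultimately show ?thesis unfolding ideal_gen_Ggen by (metis lspan_base)
qed


lemma ideal_conv_right_delta:
  assumes R: "R \<subseteq> Free" and j: "j \<in> ideal_gen R"
  shows "conv j (fdelta w) \<in> ideal_gen (R::('h list \<Rightarrow> 'k::comm_ring_1) set)"
  using j unfolding ideal_gen_Ggen
proof (induct rule: lspan.induct)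
  case lspan_zero
  show ?case by (simp only: conv_zero_left lspan.lspan_zero)
next
  case (lspan_step y g c)
  from lspan_step(3) obtain u r v where g: "g = conv (conv (fdelta u) r) (fdelta v)" and r: "r \<in> R"
    unfolding Ggen_def by blast
  have rF: "r \<in> Free" using r R by blast
  have "conv g (fdelta w) = conv (conv (fdelta u) r) (conv (fdelta v) (fdelta w))"
    unfolding g by (rule conv_assoc) (use rF in auto)
  also have "\<dots> = conv (conv (fdelta u) r) (fdelta (v @ w))" by (simp only: conv_fdelta)
  finally have "conv g (fdelta w) \<in> Ggen R" unfolding Ggen_def using r by blast
  then have "conv g (fdelta w) \<in> lspan (Ggen R)" by (rule lspan_base)
  then have "conv y (fdelta w) + fscale c (conv g (fdelta w)) \<in> lspan (Ggen R)"
    using lspan_step(2) by (intro lspan_add lspan_fscale)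
  then show ?case by (simp only: conv_add_left conv_fscale_left)
qed

lemma ideal_conv_left_delta:
  assumes R: "R \<subseteq> Free" and j: "j \<in> ideal_gen R"
  shows "conv (fdelta w) j \<in> ideal_gen (R::('h list \<Rightarrow> 'k::comm_ring_1) set)"
  using j unfolding ideal_gen_Ggen
proof (induct rule: lspan.induct)
  case lspan_zero
  show ?case by (simp only: conv_zero_right lspan.lspan_zero)
next
  case (lspan_step y g c)
  from lspan_step(3) obtain u r v where g: "g = conv (conv (fdelta u) r) (fdelta v)" and r: "r \<in> R"
    unfolding Ggen_def by blast
  have rF: "r \<in> Free" using r R by blast
  have "conv (fdelta w) g = conv (conv (fdelta w) (conv (fdelta u) r)) (fdelta v)"
    unfolding g by (rule conv_assoc[symmetric]) (use rF in auto)
  also have "\<dots> = conv (conv (conv (fdelta w) (fdelta u)) r) (fdelta v)"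
    by (subst conv_assoc) (use rF in auto)
  also have "\<dots> = conv (conv (fdelta (w @ u)) r) (fdelta v)" by (simp only: conv_fdelta)
  finally have "conv (fdelta w) g \<in> Ggen R" unfolding Ggen_def using r by blast
  then have "conv (fdelta w) g \<in> lspan (Ggen R)" by (rule lspan_base)
  then have "conv (fdelta w) y + fscale c (conv (fdelta w) g) \<in> lspan (Ggen R)"
    using lspan_step(2) by (intro lspan_add lspan_fscale)
  then show ?case by (simp only: conv_add_right conv_fscale_right)
qed

lemma ideal_conv_right:
  assumes R: "R \<subseteq> Free" and j: "j \<in> ideal_gen R" and f: "f \<in> Free"
  shows "conv j f \<in> ideal_gen (R::('h list \<Rightarrow> 'k::comm_ring_1) set)"
proof -
  have "conv j f = (\<Sum>w\<in>fsupp f. fscale (f w) (conv j (fdelta w)))"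
    by (subst Free_decomp[OF f]) (simp only: conv_sum_right conv_fscale_right)
  also have "\<dots> \<in> ideal_gen R" unfolding ideal_gen_Ggen
    by (intro lspan_sum lspan_fscale ideal_conv_right_delta[OF R j, unfolded ideal_gen_Ggen])
  finally show ?thesis .
qed

lemma ideal_conv_left:
  assumes R: "R \<subseteq> Free" and j: "j \<in> ideal_gen R" and f: "f \<in> Free"
  shows "conv f j \<in> ideal_gen (R::('h list \<Rightarrow> 'k::comm_ring_1) set)"
proof -
  have "conv f j = (\<Sum>w\<in>fsupp f. fscale (f w) (conv (fdelta w) j))"
    by (subst Free_decomp[OF f]) (simp only: conv_sum_left conv_fscale_left)
  also have "\<dots> \<in> ideal_gen R" unfolding ideal_gen_Ggen
    by (intro lspan_sum lspan_fscale ideal_conv_left_delta[OF R j, unfolded ideal_gen_Ggen])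
  finally show ?thesis .
qed

lemma fscale_diff: "fscale c (f - g) = fscale c f - fscale c (g::'h list \<Rightarrow> 'k::comm_ring_1)"
  by (simp add: fscale_def fun_eq_iff algebra_simps)

locale qctx =
  fixes R :: "('h list \<Rightarrow> 'k::field) set"
  assumes R_Free: "R \<subseteq> Free"
begin

abbreviation "J \<equiv> ideal_gen R"

lemma J_Free: "x \<in> J \<Longrightarrow> x \<in> Free"
  using ideal_Free[OF R_Free] by blast

lemma J_zero: "0 \<in> J" unfolding ideal_gen_Ggen by (rule lspan.lspan_zero)
lemma J_add: "x \<in> J \<Longrightarrow> y \<in> J \<Longrightarrow> x + y \<in> J" unfolding ideal_gen_Ggen by (rule lspan_add)
lemma J_diff: "x \<in> J \<Longrightarrow> y \<in> J \<Longrightarrow> x - y \<in> J" unfolding ideal_gen_Ggen by (rule lspan_diff)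
lemma J_fscale: "x \<in> J \<Longrightarrow> fscale c x \<in> J" unfolding ideal_gen_Ggen by (rule lspan_fscale)

lemma cls_self: "x \<in> Free \<Longrightarrow> x \<in> cls J x"
  by (simp add: cls_def J_zero)

lemma cls_eq: assumes "x \<in> Free" "y \<in> Free" "x - y \<in> J" shows "cls J x = cls J y"
proof -
  have "x - z \<in> J \<longleftrightarrow> y - z \<in> J" for z
  proof
    assume "x - z \<in> J"
    from J_diff[OF this assms(3)] show "y - z \<in> J" by (simp add: algebra_simps)
  next
    assume "y - z \<in> J"
    from J_add[OF this assms(3)] show "x - z \<in> J" by (simp add: algebra_simps)
  qed
  then show ?thesis by (auto simp: cls_def)
qed

lemma rep_cls: assumes "x \<in> Free" shows "rep (cls J x) \<in> Free" "x - rep (cls J x) \<in> J"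
proof -
  have "rep (cls J x) \<in> cls J x" using cls_self[OF assms] unfolding rep_def by (metis someI)
  then show "rep (cls J x) \<in> Free" "x - rep (cls J x) \<in> J" by (auto simp: cls_def)
qed

lemma cls_rep: "x \<in> Free \<Longrightarrow> cls J (rep (cls J x)) = cls J x"
  using cls_eq rep_cls J_diff J_zero by (metis diff_self diff_0 J_diff)

lemma qadd_cls: assumes "x \<in> Free" "y \<in> Free" shows "qadd J (cls J x) (cls J y) = cls J (x + y)"
  unfolding qadd_def
proof (rule cls_eq)
  show "rep (cls J x) + rep (cls J y) - (x + y) \<in> J"
    using J_add[OF rep_cls(2)[OF assms(1)] rep_cls(2)[OF assms(2)]] J_diff[OF J_zero]
    by (metis (no_types, lifting) add_diff_add diff_0 minus_diff_eq)
qed (use assms rep_cls in auto)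

lemma qscale_cls: assumes "x \<in> Free" shows "qscale J c (cls J x) = cls J (fscale c x)"
  unfolding qscale_def
proof (rule cls_eq)
  have "fscale c (x - rep (cls J x)) \<in> J" using rep_cls(2)[OF assms] by (rule J_fscale)
  then have "fscale c x - fscale c (rep (cls J x)) \<in> J" by (simp only: fscale_diff)
  then show "fscale c (rep (cls J x)) - fscale c x \<in> J"
    using J_diff[OF J_zero] by (metis diff_0 minus_diff_eq)
qed (use assms rep_cls in auto)

lemma qmul_cls: assumes "x \<in> Free" "y \<in> Free" shows "qmul J (cls J x) (cls J y) = cls J (conv x y)"
  unfolding qmul_def
proof (rule cls_eq)
  let ?rx = "rep (cls J x)" and ?ry = "rep (cls J y)"
  have "conv (x - ?rx) ?ry \<in> J" using rep_cls[OF assms(1)] rep_cls[OF assms(2)]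
    by (intro ideal_conv_right[OF R_Free])
  moreover have "conv x (y - ?ry) \<in> J" using rep_cls[OF assms(2)] assms
    by (intro ideal_conv_left[OF R_Free])
  ultimately have "conv (x - ?rx) ?ry + conv x (y - ?ry) \<in> J" by (rule J_add)
  then have "conv x y - conv ?rx ?ry \<in> J" by (simp add: conv_diff_left conv_diff_right)
  then show "conv ?rx ?ry - conv x y \<in> J"
    using J_diff[OF J_zero] by (metis diff_0 minus_diff_eq)
qed (use assms rep_cls in auto)

end

definition Phi :: "('k::zero \<Rightarrow> 'm \<Rightarrow> 'm) \<Rightarrow> ('h \<Rightarrow> 'm \<Rightarrow> 'm) \<Rightarrow> ('h list \<Rightarrow> 'k) \<Rightarrow> 'm \<Rightarrow> ('m::ab_group_add)" where
  "Phi sM P x m = lsum sM (\<lambda>w. foldr P w m) x"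

locale wctx =
  fixes sM :: "'k::field \<Rightarrow> 'm::ab_group_add \<Rightarrow> 'm" and P :: "'h \<Rightarrow> 'm \<Rightarrow> 'm"
  assumes vsM: "vector_space sM"
    and P_add: "P h (a + b) = P h a + P h b"
    and P_scale: "P h (sM c a) = sM c (P h a)"
begin

lemma modM: "module sM" using vsM by (simp add: module_iff_vector_space)

interpretation M: vector_space sM by (rule vsM)

lemma foldr_add: "foldr P w (a + b) = foldr P w a + foldr P w b"
  by (induct w) (auto simp: P_add)

lemma foldr_scale: "foldr P w (sM c a) = sM c (foldr P w a)"
  by (induct w) (auto simp: P_scale)

lemma foldr_zero: "foldr P w 0 = 0"
  using foldr_scale[of w 0 0] by simp

lemma foldr_diff: "foldr P w (a - b) = foldr P w a - foldr P w b"
  using foldr_add[of w "a - b" b] by (simp add: algebra_simps)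


lemma foldr_lsum: "foldr P u (lsum sM G f) = lsum sM (\<lambda>w. foldr P u (G w)) f"
  by (rule lsum_hom[OF modM modM, where \<phi>="foldr P u"]) (rule foldr_add, rule foldr_scale)

lemma Phi_add: "x \<in> Free \<Longrightarrow> y \<in> Free \<Longrightarrow> Phi sM P (x + y) m = Phi sM P x m + Phi sM P y m"
  unfolding Phi_def by (rule lsum_add[OF modM])

lemma Phi_fscale: "x \<in> Free \<Longrightarrow> Phi sM P (fscale c x) m = sM c (Phi sM P x m)"
  unfolding Phi_def by (rule lsum_fscale[OF modM])

lemma Phi_diff: "x \<in> Free \<Longrightarrow> y \<in> Free \<Longrightarrow> Phi sM P (x - y) m = Phi sM P x m - Phi sM P y m"
  unfolding Phi_def by (rule lsum_diff[OF modM])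

lemma Phi_zero: "Phi sM P 0 m = 0"
  unfolding Phi_def by (rule lsum_zero)

lemma Phi_fdelta: "Phi sM P (fdelta w) m = foldr P w m"
  unfolding Phi_def by (rule lsum_fdelta[OF modM])

lemma Phi_sum: "(\<And>a. a \<in> A \<Longrightarrow> FF a \<in> Free) \<Longrightarrow> Phi sM P (sum FF A) m = (\<Sum>a\<in>A. Phi sM P (FF a) m)"
  unfolding Phi_def by (rule lsum_sum[OF modM])

lemma Phi_madd: "Phi sM P x (a + b) = Phi sM P x a + Phi sM P x b"
  unfolding Phi_def foldr_add by (rule lsum_G_add[OF modM])

lemma Phi_mscale: "Phi sM P x (sM c a) = sM c (Phi sM P x a)"
proof -
  have h: "sM c (Phi sM P x a) = lsum sM (\<lambda>w. sM c (foldr P w a)) x"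
    unfolding Phi_def
    by (rule lsum_hom[OF modM modM, where \<phi>="sM c"]) (rule M.scale_right_distrib, rule M.scale_left_commute)
  have e: "Phi sM P x (sM c a) = lsum sM (\<lambda>w. sM c (foldr P w a)) x"
    unfolding Phi_def by (rule lsum_cong) (rule foldr_scale)
  show ?thesis by (simp only: e h)
qed

lemma Phi_linear: "Vector_Spaces.linear sM sM (Phi sM P x)"
  unfolding Vector_Spaces.linear_iff using vsM Phi_madd Phi_mscale by blast

lemma Phi_conv_delta:
  assumes g: "g \<in> Free"
  shows "Phi sM P (conv (fdelta u) g) m = foldr P u (Phi sM P g m)"
proof -
  have "conv (fdelta u) g = (\<Sum>v\<in>fsupp g. fscale (g v) (fdelta (u @ v)))"
    by (subst Free_decomp[OF g]) (simp only: conv_sum_right conv_fscale_right conv_fdelta)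
  then have "Phi sM P (conv (fdelta u) g) m = (\<Sum>v\<in>fsupp g. sM (g v) (foldr P u (foldr P v m)))"
    by (simp add: Phi_sum Phi_fscale Phi_fdelta)
  also have "\<dots> = foldr P u (Phi sM P g m)"
    unfolding Phi_def foldr_lsum by (simp add: lsum_def)
  finally show ?thesis .
qed

lemma Phi_conv:
  assumes f: "f \<in> Free" and g: "g \<in> Free"
  shows "Phi sM P (conv f g) m = Phi sM P f (Phi sM P g m)"
proof -
  have "conv f g = (\<Sum>u\<in>fsupp f. fscale (f u) (conv (fdelta u) g))"
    by (subst Free_decomp[OF f]) (simp only: conv_sum_left conv_fscale_left)
  then have "Phi sM P (conv f g) m = (\<Sum>u\<in>fsupp f. sM (f u) (foldr P u (Phi sM P g m)))"
    using g by (simp add: Phi_sum Phi_fscale Phi_conv_delta)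
  also have "\<dots> = Phi sM P f (Phi sM P g m)"
    unfolding Phi_def by (simp add: lsum_def)
  finally show ?thesis .
qed

lemma Phi_lsum:
  assumes "\<And>w. FF w \<in> Free"
  shows "Phi sM P (lsum fscale FF f) m = lsum sM (\<lambda>w. Phi sM P (FF w) m) f"
proof -
  have "Phi sM P (lsum fscale FF f) m = (\<Sum>w\<in>fsupp f. Phi sM P (fscale (f w) (FF w)) m)"
    unfolding lsum_def[of fscale] using assms by (intro Phi_sum) auto
  also have "\<dots> = lsum sM (\<lambda>w. Phi sM P (FF w) m) f"
    using assms by (simp add: Phi_fscale lsum_def)
  finally show ?thesis .
qed

end

lemma on2_Free: "(\<And>a b. F a b \<in> Free) \<Longrightarrow> on2 F w \<in> Free"
  unfolding on2_def by (simp split: list.split)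

lemma on3_Free: "(\<And>a b c. F a b c \<in> Free) \<Longrightarrow> on3 F w \<in> Free"
  unfolding on3_def by (simp split: list.split)

lemma lsum_Free:
  fixes FF :: "'a list \<Rightarrow> ('h list \<Rightarrow> 'k::comm_ring_1)"
  shows "(\<And>w. FF w \<in> Free) \<Longrightarrow> lsum fscale FF f \<in> Free"
  unfolding lsum_def by (intro Free_sum Free_fscale) auto

lemma on2_map: "g 0 = 0 \<Longrightarrow> g (on2 F w) = on2 (\<lambda>a b. g (F a b)) w"
  unfolding on2_def by (simp split: list.split)

lemma on3_map: "g 0 = 0 \<Longrightarrow> g (on3 F w) = on3 (\<lambda>a b c. g (F a b c)) w"
  unfolding on3_def by (simp split: list.split)

lemma Phi_zero': "Phi sM P 0 m = 0"
  by (simp add: Phi_def lsum_zero)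

lemma Phi_on2: "Phi sM P (on2 F w) m = on2 (\<lambda>a b. Phi sM P (F a b) m) w"
  by (rule on2_map[where g="\<lambda>x. Phi sM P x m", OF Phi_zero'])

lemma Phi_on3: "Phi sM P (on3 F w) m = on3 (\<lambda>a b c. Phi sM P (F a b c) m) w"
  by (rule on3_map[where g="\<lambda>x. Phi sM P x m", OF Phi_zero'])

locale wctxr = wctx sM P for sM :: "'k::field \<Rightarrow> 'm::ab_group_add \<Rightarrow> 'm" and P :: "'h::ring_1 \<Rightarrow> 'm \<Rightarrow> 'm"
begin

lemma Phi_on2_diff:
  "Phi sM P (lsum fscale (on2 (\<lambda>a b. fdelta (F a b) - fdelta (G a b))) f) m
   = lsum sM (on2 (\<lambda>a b. foldr P (F a b) m)) f - lsum sM (on2 (\<lambda>a b. foldr P (G a b) m)) f"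
proof -
  have "Phi sM P (lsum fscale (on2 (\<lambda>a b. fdelta (F a b) - fdelta (G a b))) f) m
     = lsum sM (\<lambda>w. Phi sM P (on2 (\<lambda>a b. fdelta (F a b) - fdelta (G a b)) w) m) f"
    by (rule Phi_lsum) (rule on2_Free, simp)
  also have "\<dots> = lsum sM (\<lambda>w. on2 (\<lambda>a b. foldr P (F a b) m) w - on2 (\<lambda>a b. foldr P (G a b) m) w) f"
    by (rule lsum_cong) (simp add: Phi_on2 Phi_diff Phi_fdelta Phi_zero on2_def split: list.split)
  also have "\<dots> = lsum sM (on2 (\<lambda>a b. foldr P (F a b) m)) f - lsum sM (on2 (\<lambda>a b. foldr P (G a b) m)) f"
    by (rule lsum_G_diff[OF modM])
  finally show ?thesis .
qed

lemma Phi_on3_last: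
  "Phi sM P (fdelta [h] - lsum fscale (on3 (\<lambda>a b c. fdelta (F a b c))) f) m
   = P h m - lsum sM (on3 (\<lambda>a b c. foldr P (F a b c) m)) f"
proof -
  have fr: "lsum fscale (on3 (\<lambda>a b c. fdelta (F a b c))) f \<in> Free"
    by (intro lsum_Free on3_Free) simp
  have "Phi sM P (lsum fscale (on3 (\<lambda>a b c. fdelta (F a b c))) f) m
     = lsum sM (\<lambda>w. Phi sM P (on3 (\<lambda>a b c. fdelta (F a b c)) w) m) f"
    by (rule Phi_lsum) (rule on3_Free, simp)
  also have "\<dots> = lsum sM (on3 (\<lambda>a b c. foldr P (F a b c) m)) f"
    by (rule lsum_cong) (simp add: Phi_on3 Phi_fdelta Phi_zero on3_def split: list.split)
  finally show ?thesis using fr by (simp add: Phi_diff Phi_fdelta)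
qed

lemma kills_of_pm:
  assumes pm: "partial_module sH \<Delta> S sM P" and r: "r \<in> linrel sH \<union> parrels \<Delta> S"
  shows "Phi sM P r m = 0"
proof -
  from pm have lin2: "Vector_Spaces.linear sH sM (\<lambda>h. P h m)" for m
    unfolding partial_module_def by blast
  have Padd: "P (a + b) m = P a m + P b m" for a b m
    using lin2[of m] unfolding Vector_Spaces.linear_iff by blast
  have Pscale: "P (sH c a) m = sM c (P a m)" for c a m
    using lin2[of m] unfolding Vector_Spaces.linear_iff by blast
  from pm have ax: "\<forall>m. P 1 m = m"
   "\<forall>h k m. lsum sM (on2 (\<lambda>a b. P h (P a (P (S b) m)))) (\<Delta> k)
             = lsum sM (on2 (\<lambda>a b. P (h * a) (P (S b) m))) (\<Delta> k)"
   "\<forall>h k m. lsum sM (on2 (\<lambda>a b. P h (P (S a) (P b m)))) (\<Delta> k)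
             = lsum sM (on2 (\<lambda>a b. P (h * S a) (P b m))) (\<Delta> k)"
   "\<forall>h k m. lsum sM (on2 (\<lambda>a b. P a (P (S b) (P k m)))) (\<Delta> h)
             = lsum sM (on2 (\<lambda>a b. P a (P (S b * k) m))) (\<Delta> h)"
   "\<forall>h k m. lsum sM (on2 (\<lambda>a b. P (S a) (P b (P k m)))) (\<Delta> h)
             = lsum sM (on2 (\<lambda>a b. P (S a) (P (b * k) m))) (\<Delta> h)"
   "\<forall>h m. lsum sM (on3 (\<lambda>a b c. P a (P (S b) (P c m)))) (D2 \<Delta> h) = P h m"
    unfolding partial_module_def by blast+
  from r show ?thesis
  proof
    assume "r \<in> linrel sH"
    then show ?thesis unfolding linrel_def
    proof (elim UnE CollectE exE conjE)
      fix u a b v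
      assume "r = fdelta (u @ [a + b] @ v) - fdelta (u @ [a] @ v) - fdelta (u @ [b] @ v)"
      then show ?thesis by (simp add: Phi_diff Phi_fdelta Padd foldr_add)
    next
      fix u c a v
      assume "r = fdelta (u @ [sH c a] @ v) - fscale c (fdelta (u @ [a] @ v))"
      then show ?thesis by (simp add: Phi_diff Phi_fdelta Phi_fscale Pscale foldr_scale)
    qed
  next
    assume "r \<in> parrels \<Delta> S"
    then show ?thesis unfolding parrels_def
    proof (elim UnE CollectE exE conjE insertE emptyE)
      assume "r = fdelta [1] - fdelta []"
      then show ?thesis using ax(1) by (simp add: Phi_diff Phi_fdelta)
    next
      fix h k assume "r = lsum fscale (on2 (\<lambda>a b. fdelta [h, a, S b] - fdelta [h * a, S b])) (\<Delta> k)"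
      then show ?thesis using ax(2) by (simp add: Phi_on2_diff)
    next
      fix h k assume "r = lsum fscale (on2 (\<lambda>a b. fdelta [h, S a, b] - fdelta [h * S a, b])) (\<Delta> k)"
      then show ?thesis using ax(3) by (simp add: Phi_on2_diff)
    next
      fix h k assume "r = lsum fscale (on2 (\<lambda>a b. fdelta [a, S b, k] - fdelta [a, S b * k])) (\<Delta> h)"
      then show ?thesis using ax(4) by (simp add: Phi_on2_diff)
    next
      fix h k assume "r = lsum fscale (on2 (\<lambda>a b. fdelta [S a, b, k] - fdelta [S a, b * k])) (\<Delta> h)"
      then show ?thesis using ax(5) by (simp add: Phi_on2_diff)
    next
      fix h assume "r = fdelta [h] - lsum fscale (on3 (\<lambda>a b c. fdelta [a, S b, c])) (D2 \<Delta> h)"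
      then show ?thesis using ax(6) by (simp add: Phi_on3_last)
    qed
  qed
qed

lemma pm_of_kills:
  assumes vsH: "vector_space sH"
    and K: "\<And>r m. r \<in> linrel sH \<union> parrels \<Delta> S \<Longrightarrow> Phi sM P r m = 0"
  shows "partial_module sH \<Delta> S sM P"
proof -
  have L: "r \<in> linrel sH \<Longrightarrow> Phi sM P r m = 0" for r m using K by blast
  have Pr: "r \<in> parrels \<Delta> S \<Longrightarrow> Phi sM P r m = 0" for r m using K by blast
  have Padd: "P (a + b) m = P a m + P b m" for a b m
  proof -
    have "fdelta ([] @ [a + b] @ []) - fdelta ([] @ [a] @ []) - fdelta ([] @ [b] @ []) \<in> linrel sH"
      unfolding linrel_def by blast
    from L[OF this, of m] have X: "P (a + b) m - P a m = P b m" by (simp add: Phi_diff Phi_fdelta)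
    then show ?thesis by (metis diff_eq_eq add.commute)
  qed
  have Pscale: "P (sH c a) m = sM c (P a m)" for c a m
  proof -
    have "fdelta ([] @ [sH c a] @ []) - fscale c (fdelta ([] @ [a] @ [])) \<in> linrel sH"
      unfolding linrel_def by blast
    from L[OF this, of m] show ?thesis by (simp add: Phi_diff Phi_fdelta Phi_fscale)
  qed
  have lin1: "Vector_Spaces.linear sM sM (P h)" for h
    unfolding Vector_Spaces.linear_iff using vsM P_add P_scale by blast
  have lin2: "Vector_Spaces.linear sH sM (\<lambda>h. P h m)" for m
    unfolding Vector_Spaces.linear_iff using vsM vsH Padd Pscale by blast
  have one: "P 1 m = m" for m
  proof -
    have "fdelta [1] - fdelta [] \<in> parrels \<Delta> S" unfolding parrels_def by blast
    from Pr[OF this, of m] show ?thesis by (simp add: Phi_diff Phi_fdelta)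
  qed
  have a2: "lsum sM (on2 (\<lambda>a b. P h (P a (P (S b) m)))) (\<Delta> k)
             = lsum sM (on2 (\<lambda>a b. P (h * a) (P (S b) m))) (\<Delta> k)" for h k m
  proof -
    have "lsum fscale (on2 (\<lambda>a b. fdelta [h, a, S b] - fdelta [h * a, S b])) (\<Delta> k) \<in> parrels \<Delta> S"
      unfolding parrels_def by blast
    from Pr[OF this, of m] show ?thesis by (simp add: Phi_on2_diff)
  qed
  have a3: "lsum sM (on2 (\<lambda>a b. P h (P (S a) (P b m)))) (\<Delta> k)
             = lsum sM (on2 (\<lambda>a b. P (h * S a) (P b m))) (\<Delta> k)" for h k m
  proof -
    have "lsum fscale (on2 (\<lambda>a b. fdelta [h, S a, b] - fdelta [h * S a, b])) (\<Delta> k) \<in> parrels \<Delta> S"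
      unfolding parrels_def by blast
    from Pr[OF this, of m] show ?thesis by (simp add: Phi_on2_diff)
  qed
  have a4: "lsum sM (on2 (\<lambda>a b. P a (P (S b) (P k m)))) (\<Delta> h)
             = lsum sM (on2 (\<lambda>a b. P a (P (S b * k) m))) (\<Delta> h)" for h k m
  proof -
    have "lsum fscale (on2 (\<lambda>a b. fdelta [a, S b, k] - fdelta [a, S b * k])) (\<Delta> h) \<in> parrels \<Delta> S"
      unfolding parrels_def by blast
    from Pr[OF this, of m] show ?thesis by (simp add: Phi_on2_diff)
  qed
  have a5: "lsum sM (on2 (\<lambda>a b. P (S a) (P b (P k m)))) (\<Delta> h)
             = lsum sM (on2 (\<lambda>a b. P (S a) (P (b * k) m))) (\<Delta> h)" for h k m
  proof -
    have "lsum fscale (on2 (\<lambda>a b. fdelta [S a, b, k] - fdelta [S a, b * k])) (\<Delta> h) \<in> parrels \<Delta> S"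
      unfolding parrels_def by blast
    from Pr[OF this, of m] show ?thesis by (simp add: Phi_on2_diff)
  qed
  have a6: "lsum sM (on3 (\<lambda>a b c. P a (P (S b) (P c m)))) (D2 \<Delta> h) = P h m" for h m
  proof -
    have "fdelta [h] - lsum fscale (on3 (\<lambda>a b c. fdelta [a, S b, c])) (D2 \<Delta> h) \<in> parrels \<Delta> S"
      unfolding parrels_def by blast
    from Pr[OF this, of m] show ?thesis by (simp add: Phi_on3_last)
  qed
  show ?thesis unfolding partial_module_def
    using lin1 lin2 one a2 a3 a4 a5 a6 by blast
qed

end

lemma linrel_Free: "linrel sH \<subseteq> Free"
  unfolding linrel_def by auto

lemma parrels_Free: "parrels \<Delta> S \<subseteq> Free"
  unfolding parrels_def
  by (auto intro!: lsum_Free on2_Free on3_Free Free_diff)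

definition mkact where
  "mkact sH \<Delta> S sM P X = (if X \<in> Hpar sH \<Delta> S then Phi sM P (rep X) else (\<lambda>_. undefined))"

lemma wctxr_of_pm:
  assumes "vector_space sM" "partial_module sH \<Delta> S sM P"
  shows "wctxr sM P"
proof -
  from assms(2) have "Vector_Spaces.linear sM sM (P h)" for h unfolding partial_module_def by blast
  then show ?thesis unfolding wctxr_def wctx_def Vector_Spaces.linear_iff using assms(1) by blast
qed

locale mctx =
  fixes sH :: "'k::field \<Rightarrow> 'h::ring_1 \<Rightarrow> 'h" and \<Delta> :: "'h \<Rightarrow> ('h list \<Rightarrow> 'k)" and S :: "'h \<Rightarrow> 'h"
  assumes vsH: "vector_space sH"
begin

sublocale qctx "linrel sH \<union> parrels \<Delta> S"
  by unfold_locales (use linrel_Free parrels_Free in blast)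

abbreviation "RR \<equiv> linrel sH \<union> parrels \<Delta> S"

lemma Jpar_eq: "Jpar sH \<Delta> S = J" by (simp add: Jpar_def)

lemma Hpar_eq: "Hpar sH \<Delta> S = cls J ` Free" by (simp add: Hpar_def Jpar_eq)

lemma cls_in_Hpar: "x \<in> Free \<Longrightarrow> cls J x \<in> Hpar sH \<Delta> S" by (simp add: Hpar_eq)

lemma kills_J:
  assumes w: "wctxr sM P" and K: "\<forall>r\<in>RR. \<forall>m. Phi sM P r m = 0" and j: "j \<in> J"
  shows "Phi sM P j m = 0"
  using j unfolding ideal_gen_Ggen
proof (induct arbitrary: m rule: lspan.induct)
  case lspan_zero
  show ?case by (rule wctx.Phi_zero[OF w[unfolded wctxr_def]])
next
  case (lspan_step y g c)
  have wc: "wctx sM P" using w by (simp add: wctxr_def)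
  have yF: "y \<in> Free" by (rule lspan_Free[OF lspan_step(1) Ggen_Free[OF R_Free]])
  from lspan_step(3) obtain u r v where g: "g = conv (conv (fdelta u) r) (fdelta v)" and r: "r \<in> RR"
    unfolding Ggen_def by blast
  have rF: "r \<in> Free" using r R_Free by blast
  have uF: "conv (fdelta u) r \<in> Free" by (rule Free_conv[OF Free_fdelta rF])
  have gF: "g \<in> Free" unfolding g by (rule Free_conv[OF uF Free_fdelta])
  have r0: "Phi sM P r m' = 0" for m' using K r by blast
  have "Phi sM P g m = Phi sM P (conv (fdelta u) r) (Phi sM P (fdelta v) m)"
    unfolding g by (rule wctx.Phi_conv[OF wc uF Free_fdelta])
  also have "\<dots> = Phi sM P (fdelta u) (Phi sM P r (Phi sM P (fdelta v) m))"
    by (rule wctx.Phi_conv[OF wc Free_fdelta rF])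
  also have "\<dots> = foldr P u 0" unfolding r0 by (rule wctx.Phi_fdelta[OF wc])
  also have "\<dots> = 0" by (rule wctx.foldr_zero[OF wc])
  finally have g0: "Phi sM P g m = 0" .
  have e: "(\<lambda>a. y a + fscale c g a) = y + fscale c g" by (rule ext) simp
  have "Phi sM P (y + fscale c g) m = Phi sM P y m + sM c (Phi sM P g m)"
    by (simp only: wctx.Phi_add[OF wc yF Free_fscale[OF gF]] wctx.Phi_fscale[OF wc gF])
  also have "\<dots> = 0" using lspan_step(2) g0 by (simp add: wctx.modM[OF wc] module.scale_zero_right)
  finally show ?case unfolding e .
qed

lemma Phi_rep:
  assumes w: "wctxr sM P" and K: "\<forall>r\<in>RR. \<forall>m. Phi sM P r m = 0" and x: "x \<in> Free"
  shows "Phi sM P (rep (cls J x)) m = Phi sM P x m"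
proof -
  interpret wctx sM P using w by (simp add: wctxr_def)
  have "Phi sM P (x - rep (cls J x)) m = 0" by (rule kills_J[OF w K rep_cls(2)[OF x]])
  then show ?thesis using rep_cls[OF x] x by (simp add: Phi_diff)
qed

lemma mkact_cls: "x \<in> Free \<Longrightarrow> mkact sH \<Delta> S sM P (cls J x) = Phi sM P (rep (cls J x))"
  by (simp add: mkact_def cls_in_Hpar)

lemma mkact_pam:
  assumes vsM: "vector_space sM" and pm: "partial_module sH \<Delta> S sM P"
  shows "par_alg_module sH \<Delta> S sM (mkact sH \<Delta> S sM P)"
proof -
  have w: "wctxr sM P" by (rule wctxr_of_pm[OF vsM pm])
  interpret wctx sM P using w by (simp add: wctxr_def)
  have K: "\<forall>r\<in>RR. \<forall>m. Phi sM P r m = 0"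
    using wctxr.kills_of_pm[OF w pm] by blast
  note PR = Phi_rep[OF w K]
  let ?a = "mkact sH \<Delta> S sM P"
  have c1: "\<forall>X. X \<notin> Hpar sH \<Delta> S \<longrightarrow> ?a X = (\<lambda>_. undefined)" by (simp add: mkact_def)
  have c2: "\<forall>X\<in>Hpar sH \<Delta> S. Vector_Spaces.linear sM sM (?a X)"
    by (simp add: mkact_def Phi_linear)
  have c3: "\<forall>X\<in>Hpar sH \<Delta> S. \<forall>Y\<in>Hpar sH \<Delta> S. \<forall>m. ?a (qadd J X Y) m = ?a X m + ?a Y m"
  proof (intro ballI allI)
    fix X Y m assume "X \<in> Hpar sH \<Delta> S" "Y \<in> Hpar sH \<Delta> S"
    then obtain x y where x: "x \<in> Free" "X = cls J x" and y: "y \<in> Free" "Y = cls J y"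
      unfolding Hpar_eq by blast
    show "?a (qadd J X Y) m = ?a X m + ?a Y m"
      using x y by (simp add: qadd_cls mkact_cls PR Phi_add)
  qed
  have c4: "\<forall>c. \<forall>X\<in>Hpar sH \<Delta> S. \<forall>m. ?a (qscale J c X) m = sM c (?a X m)"
  proof (intro ballI allI)
    fix c X m assume "X \<in> Hpar sH \<Delta> S"
    then obtain x where x: "x \<in> Free" "X = cls J x" unfolding Hpar_eq by blast
    show "?a (qscale J c X) m = sM c (?a X m)"
      using x by (simp add: qscale_cls mkact_cls PR Phi_fscale)
  qed
  have c5: "\<forall>X\<in>Hpar sH \<Delta> S. \<forall>Y\<in>Hpar sH \<Delta> S. \<forall>m. ?a (qmul J X Y) m = ?a X (?a Y m)"
  proof (intro ballI allI)
    fix X Y m assume "X \<in> Hpar sH \<Delta> S" "Y \<in> Hpar sH \<Delta> S"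
    then obtain x y where x: "x \<in> Free" "X = cls J x" and y: "y \<in> Free" "Y = cls J y"
      unfolding Hpar_eq by blast
    show "?a (qmul J X Y) m = ?a X (?a Y m)"
      using x y by (simp add: qmul_cls mkact_cls PR Phi_conv)
  qed
  have c6: "\<forall>m. ?a (qone J) m = m"
    by (simp add: qone_def mkact_cls PR Phi_fdelta)
  show ?thesis unfolding par_alg_module_def Let_def Jpar_eq
    by (intro conjI c1 c2 c3 c4 c5 c6)
qed

lemma to_partial_mkact:
  assumes vsM: "vector_space sM" and pm: "partial_module sH \<Delta> S sM P"
  shows "to_partial sH \<Delta> S (mkact sH \<Delta> S sM P) = P"
proof -
  have w: "wctxr sM P" by (rule wctxr_of_pm[OF vsM pm])
  interpret wctx sM P using w by (simp add: wctxr_def)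
  have K: "\<forall>r\<in>RR. \<forall>m. Phi sM P r m = 0"
    using wctxr.kills_of_pm[OF w pm] by blast
  show ?thesis
  proof (intro ext)
    fix h m
    have "Phi sM P (rep (cls J (fdelta [h]))) m = Phi sM P (fdelta [h]) m" by (rule Phi_rep[OF w K], rule Free_fdelta)
    then show "to_partial sH \<Delta> S (mkact sH \<Delta> S sM P) h m = P h m"
      by (simp add: to_partial_def Jpar_eq mkact_cls Phi_fdelta)
  qed
qed

end

context mctx
begin

lemma pam_parts:
  assumes pa: "par_alg_module sH \<Delta> S sM act"
  shows "\<forall>X. X \<notin> Hpar sH \<Delta> S \<longrightarrow> act X = (\<lambda>_. undefined)"
    and "\<forall>X\<in>Hpar sH \<Delta> S. Vector_Spaces.linear sM sM (act X)"
    and "\<forall>X\<in>Hpar sH \<Delta> S. \<forall>Y\<in>Hpar sH \<Delta> S. \<forall>m. act (qadd J X Y) m = act X m + act Y m"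
    and "\<forall>c. \<forall>X\<in>Hpar sH \<Delta> S. \<forall>m. act (qscale J c X) m = sM c (act X m)"
    and "\<forall>X\<in>Hpar sH \<Delta> S. \<forall>Y\<in>Hpar sH \<Delta> S. \<forall>m. act (qmul J X Y) m = act X (act Y m)"
    and "\<forall>m. act (qone J) m = m"
  using pa unfolding par_alg_module_def Let_def Jpar_eq by blast+

lemma to_partial_eq: "to_partial sH \<Delta> S act h = act (cls J (fdelta [h]))"
  by (simp add: to_partial_def Jpar_eq)

lemma pam_wctxr:
  assumes vsM: "vector_space sM" and pa: "par_alg_module sH \<Delta> S sM act"
  shows "wctxr sM (to_partial sH \<Delta> S act)"
proof -
  have "Vector_Spaces.linear sM sM (act (cls J (fdelta [h])))" for h
    using pam_parts(2)[OF pa] cls_in_Hpar[of "fdelta [h]"] by simp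
  then show ?thesis unfolding wctxr_def wctx_def Vector_Spaces.linear_iff to_partial_eq
    using vsM by blast
qed

lemma pam_zero:
  assumes vsM: "vector_space sM" and pa: "par_alg_module sH \<Delta> S sM act"
  shows "act (cls J 0) m = 0"
proof -
  interpret M: vector_space sM by (rule vsM)
  have "qscale J 0 (cls J 0) = cls J 0" by (simp add: qscale_cls fscale_zero)
  then have "act (cls J 0) m = sM 0 (act (cls J 0) m)"
    using pam_parts(4)[OF pa] cls_in_Hpar[of 0] by (metis Free_zero)
  then show ?thesis by simp
qed

lemma pam_word:
  assumes vsM: "vector_space sM" and pa: "par_alg_module sH \<Delta> S sM act"
  shows "act (cls J (fdelta w)) m = foldr (to_partial sH \<Delta> S act) w m"
proof (induct w arbitrary: m)
  case Nil
  then show ?case using pam_parts(6)[OF pa] by (simp add: qone_def)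
next
  case (Cons h w)
  have e: "cls J (fdelta (h # w)) = qmul J (cls J (fdelta [h])) (cls J (fdelta w))"
    by (simp add: qmul_cls conv_fdelta)
  show ?case
    unfolding e using pam_parts(5)[OF pa] cls_in_Hpar Cons by (simp add: to_partial_eq)
qed

lemma pam_sum:
  assumes vsM: "vector_space sM" and pa: "par_alg_module sH \<Delta> S sM act" and fin: "finite A"
  shows "act (cls J (\<Sum>w\<in>A. fscale (c w) (fdelta w))) m
       = (\<Sum>w\<in>A. sM (c w) (foldr (to_partial sH \<Delta> S act) w m))"
  using fin
proof (induct A rule: finite_induct)
  case empty
  show ?case by (simp only: sum.empty pam_zero[OF vsM pa])
next
  case (insert x X)
  have e: "(\<Sum>w\<in>insert x X. fscale (c w) (fdelta w)) = fscale (c x) (fdelta x) + (\<Sum>w\<in>X. fscale (c w) (fdelta w))"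
    by (rule sum.insert[OF insert(1,2)])
  have F1: "fscale (c x) (fdelta x) \<in> Free" by simp
  have F2: "(\<Sum>w\<in>X. fscale (c w) (fdelta w)) \<in> Free" by (intro Free_sum) simp
  have "act (cls J (\<Sum>w\<in>insert x X. fscale (c w) (fdelta w))) m
      = act (qadd J (cls J (fscale (c x) (fdelta x))) (cls J (\<Sum>w\<in>X. fscale (c w) (fdelta w)))) m"
    unfolding e qadd_cls[OF F1 F2] ..
  also have "\<dots> = act (cls J (fscale (c x) (fdelta x))) m + act (cls J (\<Sum>w\<in>X. fscale (c w) (fdelta w))) m"
    using pam_parts(3)[OF pa] cls_in_Hpar[OF F1] cls_in_Hpar[OF F2] by blast
  also have "act (cls J (fscale (c x) (fdelta x))) m = sM (c x) (foldr (to_partial sH \<Delta> S act) x m)"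
  proof -
    have "cls J (fscale (c x) (fdelta x)) = qscale J (c x) (cls J (fdelta x))"
      by (simp add: qscale_cls)
    then show ?thesis using pam_parts(4)[OF pa] cls_in_Hpar[of "fdelta x"]
      by (simp add: pam_word[OF vsM pa])
  qed
  also have "act (cls J (\<Sum>w\<in>X. fscale (c w) (fdelta w))) m = (\<Sum>w\<in>X. sM (c w) (foldr (to_partial sH \<Delta> S act) w m))"
    by (rule insert(3))
  finally show ?case using insert(1,2) by simp
qed

lemma pam_rep:
  assumes vsM: "vector_space sM" and pa: "par_alg_module sH \<Delta> S sM act" and x: "x \<in> Free"
  shows "act (cls J x) m = Phi sM (to_partial sH \<Delta> S act) x m"
proof -
  have d: "x = (\<Sum>w\<in>fsupp x. fscale (x w) (fdelta w))" by (rule Free_decomp[OF x])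
  have fin: "finite (fsupp x)" using x by (simp add: Free_def)
  have "act (cls J x) m = act (cls J (\<Sum>w\<in>fsupp x. fscale (x w) (fdelta w))) m"
    by (rule arg_cong[where f="\<lambda>z. act (cls J z) m"]) (rule d)
  also have "\<dots> = (\<Sum>w\<in>fsupp x. sM (x w) (foldr (to_partial sH \<Delta> S act) w m))"
    by (rule pam_sum[OF vsM pa fin])
  also have "\<dots> = Phi sM (to_partial sH \<Delta> S act) x m"
    by (simp add: Phi_def lsum_def)
  finally show ?thesis .
qed

lemma pam_kills:
  assumes vsM: "vector_space sM" and pa: "par_alg_module sH \<Delta> S sM act"
  shows "\<forall>r\<in>RR. \<forall>m. Phi sM (to_partial sH \<Delta> S act) r m = 0"
proof (intro ballI allI)
  fix r m assume r: "r \<in> RR"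
  have rF: "r \<in> Free" using r R_Free by blast
  have rJ: "r \<in> J" using r by (rule ideal_base)
  have "cls J r = cls J 0" by (rule cls_eq) (use rF rJ in simp_all)
  then show "Phi sM (to_partial sH \<Delta> S act) r m = 0"
    using pam_rep[OF vsM pa rF, of m] pam_zero[OF vsM pa, of m] by simp
qed

lemma pam_pm:
  assumes vsM: "vector_space sM" and pa: "par_alg_module sH \<Delta> S sM act"
  shows "partial_module sH \<Delta> S sM (to_partial sH \<Delta> S act)"
proof (rule wctxr.pm_of_kills[OF pam_wctxr[OF vsM pa] vsH])
  fix r m assume "r \<in> RR"
  then show "Phi sM (to_partial sH \<Delta> S act) r m = 0" using pam_kills[OF vsM pa] by blast
qed

lemma mkact_to_partial:
  assumes vsM: "vector_space sM" and pa: "par_alg_module sH \<Delta> S sM act"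
  shows "mkact sH \<Delta> S sM (to_partial sH \<Delta> S act) = act"
proof (intro ext)
  fix X m
  show "mkact sH \<Delta> S sM (to_partial sH \<Delta> S act) X m = act X m"
  proof (cases "X \<in> Hpar sH \<Delta> S")
    case True
    then obtain x where x: "x \<in> Free" "X = cls J x" unfolding Hpar_eq by blast
    have "mkact sH \<Delta> S sM (to_partial sH \<Delta> S act) X m = Phi sM (to_partial sH \<Delta> S act) x m"
      using x by (simp add: mkact_cls Phi_rep[OF pam_wctxr[OF vsM pa] pam_kills[OF vsM pa]])
    also have "\<dots> = act X m" using x pam_rep[OF vsM pa] by simp
    finally show ?thesis .
  next
    case False
    then show ?thesis using pam_parts(1)[OF pa] by (simp add: mkact_def)
  qed
qed

lemma foldr_hom:
  assumes "\<And>h m. f (P h m) = P' h (f m)"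
  shows "f (foldr P w m) = foldr P' w (f m)"
  by (induct w arbitrary: m) (simp_all add: assms)

lemma hom_iff:
  assumes vsM: "vector_space sM" and vsN: "vector_space sN"
    and pa: "par_alg_module sH \<Delta> S sM act" and pa': "par_alg_module sH \<Delta> S sN act'"
  shows "par_alg_module_hom sH \<Delta> S sM sN act act' f
     \<longleftrightarrow> partial_module_hom sM sN (to_partial sH \<Delta> S act) (to_partial sH \<Delta> S act') f"
proof
  assume h: "par_alg_module_hom sH \<Delta> S sM sN act act' f"
  then show "partial_module_hom sM sN (to_partial sH \<Delta> S act) (to_partial sH \<Delta> S act') f"
    unfolding par_alg_module_hom_def partial_module_hom_def to_partial_eq
    using cls_in_Hpar by simp
next
  assume h: "partial_module_hom sM sN (to_partial sH \<Delta> S act) (to_partial sH \<Delta> S act') f"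
  let ?P = "to_partial sH \<Delta> S act" and ?P' = "to_partial sH \<Delta> S act'"
  have lin: "Vector_Spaces.linear sM sN f" and com: "\<And>h m. f (?P h m) = ?P' h (f m)"
    using h unfolding partial_module_hom_def by blast+
  have fadd: "f (x + y) = f x + f y" and fsc: "f (sM c x) = sN c (f x)" for x y c
    using lin unfolding Vector_Spaces.linear_iff by blast+
  have modM: "module sM" and modN: "module sN" using vsM vsN by (simp_all add: module_iff_vector_space)
  have fw: "f (foldr ?P w m') = foldr ?P' w (f m')" for w m'
    by (rule foldr_hom[where f=f and P="?P" and P'="?P'"]) (rule com)
  have "f (act X m) = act' X (f m)" if X: "X \<in> Hpar sH \<Delta> S" for X m
  proof -
    from X obtain x where x: "x \<in> Free" "X = cls J x" unfolding Hpar_eq by blast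
    have "f (act X m) = f (Phi sM ?P x m)" using x pam_rep[OF vsM pa] by simp
    also have "\<dots> = lsum sN (\<lambda>w. f (foldr ?P w m)) x"
      unfolding Phi_def by (rule lsum_hom[OF modM modN, where \<phi>=f]) (rule fadd, rule fsc)
    also have "\<dots> = Phi sN ?P' x (f m)"
      unfolding Phi_def by (rule lsum_cong) (rule fw)
    also have "\<dots> = act' X (f m)" using x pam_rep[OF vsN pa'] by simp
    finally show ?thesis .
  qed
  then show "par_alg_module_hom sH \<Delta> S sM sN act act' f"
    unfolding par_alg_module_hom_def using lin by blast
qed

end

theorem proposition6p6:
  fixes sH :: "'k::field \<Rightarrow> 'h::ring_1 \<Rightarrow> 'h"
    and \<Delta> :: "'h \<Rightarrow> ('h list \<Rightarrow> 'k)" and \<epsilon> :: "'h \<Rightarrow> 'k" and S :: "'h \<Rightarrow> 'h"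
    and sM :: "'k \<Rightarrow> 'm::ab_group_add \<Rightarrow> 'm" and sN :: "'k \<Rightarrow> 'n::ab_group_add \<Rightarrow> 'n"
  assumes "weak_hopf_algebra sH \<Delta> \<epsilon> S"
    and "vector_space sM" and "vector_space sN"
  shows "bij_betw (to_partial sH \<Delta> S)
           {act. par_alg_module sH \<Delta> S sM act} {act. partial_module sH \<Delta> S sM act}
       \<and> (\<forall>act act' f. par_alg_module sH \<Delta> S sM act \<longrightarrow> par_alg_module sH \<Delta> S sN act' \<longrightarrow>
            (par_alg_module_hom sH \<Delta> S sM sN act act' f
             \<longleftrightarrow> partial_module_hom sM sN (to_partial sH \<Delta> S act) (to_partial sH \<Delta> S act') f))"
proof -
  have vsH: "vector_space sH" using assms(1) unfolding weak_hopf_algebra_def by blast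
  interpret mctx sH \<Delta> S using vsH by (simp add: mctx_def)
  have inj: "inj_on (to_partial sH \<Delta> S) {act. par_alg_module sH \<Delta> S sM act}"
  proof (rule inj_onI)
    fix a b assume a: "a \<in> {act. par_alg_module sH \<Delta> S sM act}" and b: "b \<in> {act. par_alg_module sH \<Delta> S sM act}"
      and e: "to_partial sH \<Delta> S a = to_partial sH \<Delta> S b"
    have "a = mkact sH \<Delta> S sM (to_partial sH \<Delta> S a)" using mkact_to_partial[OF assms(2)] a by simp
    also have "\<dots> = mkact sH \<Delta> S sM (to_partial sH \<Delta> S b)" by (simp only: e)
    also have "\<dots> = b" using mkact_to_partial[OF assms(2)] b by simp
    finally show "a = b" .
  qed
  have img: "to_partial sH \<Delta> S ` {act. par_alg_module sH \<Delta> S sM act} = {act. partial_module sH \<Delta> S sM act}"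
  proof
    show "to_partial sH \<Delta> S ` {act. par_alg_module sH \<Delta> S sM act} \<subseteq> {act. partial_module sH \<Delta> S sM act}"
      using pam_pm[OF assms(2)] by blast
  next
    show "{act. partial_module sH \<Delta> S sM act} \<subseteq> to_partial sH \<Delta> S ` {act. par_alg_module sH \<Delta> S sM act}"
    proof
      fix P assume "P \<in> {act. partial_module sH \<Delta> S sM act}"
      then have pm: "partial_module sH \<Delta> S sM P" by simp
      have "P = to_partial sH \<Delta> S (mkact sH \<Delta> S sM P)" using to_partial_mkact[OF assms(2) pm] by simp
      moreover have "mkact sH \<Delta> S sM P \<in> {act. par_alg_module sH \<Delta> S sM act}"
        using mkact_pam[OF assms(2) pm] by simp
      ultimately show "P \<in> to_partial sH \<Delta> S ` {act. par_alg_module sH \<Delta> S sM act}" by blast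
    qed
  qed
  show ?thesis
    using inj img hom_iff[OF assms(2) assms(3)] unfolding bij_betw_def by blast
qed

end
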